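(* Let $A\in\mathbb{R}^{n\times n}$, $B\in\mathbb{R}^{n\times m}$, $\mathcal{A}\in\{0,*\}^{n\times n}$, $\mathcal{B}\in\{0,*\}^{n\times m}$, and let $\lambda_i\in\sigma(A)$. Then $$\max_{\Delta A\in[\mathcal{A}],\,\Delta B\in[\mathcal{B}]}\operatorname{rank}[\lambda_i I-A-\Delta A,\;B+\Delta B]=n$$ if and only if there exist $J_i^R\subseteq[n]$, $J_i^C\subseteq[n+m]$ with $|J_i^R|=|J_i^C|$, and $\bar J_i^R\subseteq[n]\setminus J_i^R$, $\bar J_i^C\subseteq[n+m]\setminus J_i^C$ with $|\bar J_i^R|=|\bar J_i^C|=n-|J_i^C|$, such that the square submatrix $[\lambda_iI-A,\ B]_{J_i^R,J_i^C}$ is nonsingular and the square pattern submatrix $[\mathcal{A},\mathcal{B}]_{\bar J_i^R,\bar J_i^C}$ has full generic rank.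
   Context: For $\mathcal{M}\in\{0,*\}^{n_1\times n_2}$, $[\mathcal{M}]=\{M\in\mathbb{R}^{n_1\times n_2}: M_{ij}=0 \text{ whenever } \mathcal{M}_{ij}=0\}$; the generic rank of $\mathcal{M}$ is the maximum rank of an element of $[\mathcal{M}]$. $M_{S_1,S_2}$ denotes the submatrix with rows indexed by $S_1$ and columns by $S_2$; $[n]=\{1,\dots,n\}$. $\sigma(A)$ is the set of complex eigenvalues of $A$; ranks are over $\mathbb{C}$. *)

theory Defs
  imports "Jordan_Normal_Form.DL_Rank_Submatrix" "Jordan_Normal_Form.Char_Poly"
begin

definition mrank :: "'a::field mat \<Rightarrow> nat" where
  "mrank M = vec_space.rank (dim_row M) M"

definition hcat :: "'a mat \<Rightarrow> 'a mat \<Rightarrow> 'a mat" where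
  "hcat X Y = mat (dim_row X) (dim_col X + dim_col Y)
     (\<lambda>(i,j). if j < dim_col X then X $$ (i,j) else Y $$ (i, j - dim_col X))"

text \<open>Zero/nonzero patterns: a bool matrix, True meaning a free entry (*), False a fixed zero.
  realizations P is the set [P] of real matrices with the pattern's zeros.\<close>
definition realizations :: "bool mat \<Rightarrow> real mat set" where
  "realizations P = {M. M \<in> carrier_mat (dim_row P) (dim_col P) \<and>
      (\<forall>i<dim_row P. \<forall>j<dim_col P. \<not> P $$ (i,j) \<longrightarrow> M $$ (i,j) = 0)}"

definition generic_rank :: "bool mat \<Rightarrow> nat" where
  "generic_rank P = Max {mrank (map_mat complex_of_real M) | M. M \<in> realizations P}"

end

theory Submission
  imports Defs
begin


definition kinj :: "(nat \<Rightarrow> nat \<Rightarrow> 'a::field) \<Rightarrow> nat set \<Rightarrow> nat set \<Rightarrow> bool" where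
"kinj X R S \<longleftrightarrow> (\<forall>v. (\<forall>i\<in>R. (\<Sum>j\<in>S. X i j * v j) = 0) \<longrightarrow> (\<forall>j\<in>S. v j = 0))"

lemma pick_bij: assumes "finite S" shows "bij_betw (pick S) {0..<card S} S"
proof -
  have inj: "inj_on (pick S) {0..<card S}"
  proof (rule inj_onI)
    fix a b assume a: "a \<in> {0..<card S}" and b: "b \<in> {0..<card S}" and e: "pick S a = pick S b"
    show "a = b"
    proof (rule ccontr)
      assume "a \<noteq> b"
      then consider "a < b" | "b < a" by linarith
      then show False using pick_mono[of b S a] pick_mono[of a S b] a b e by (cases, auto)
    qed
  qed
  have sub: "pick S ` {0..<card S} \<subseteq> S" using pick_in_set by auto
  have "card (pick S ` {0..<card S}) = card S" using card_image[OF inj] by simp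
  then have "pick S ` {0..<card S} = S" using card_subset_eq[OF assms sub] by simp
  then show ?thesis using inj bij_betw_def by blast
qed

lemma KT:
  assumes p: "bij_betw p A R" and q: "bij_betw q B S"
  shows "kinj (\<lambda>a b. X (p a) (q b)) A B \<longleftrightarrow> kinj X R S"
proof
  assume L: "kinj (\<lambda>a b. X (p a) (q b)) A B"
  show "kinj X R S" unfolding kinj_def
  proof (intro allI impI ballI)
    fix v j assume H: "\<forall>i\<in>R. (\<Sum>j\<in>S. X i j * v j) = 0" and j: "j \<in> S"
    have "\<forall>a\<in>A. (\<Sum>b\<in>B. X (p a) (q b) * v (q b)) = 0"
    proof
      fix a assume a: "a \<in> A"
      have "(\<Sum>b\<in>B. X (p a) (q b) * v (q b)) = (\<Sum>j\<in>S. X (p a) j * v j)"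
        by (rule sum.reindex_bij_betw[OF q])
      also have "\<dots> = 0" using H a p bij_betwE by blast
      finally show "(\<Sum>b\<in>B. X (p a) (q b) * v (q b)) = 0" .
    qed
    then have "\<forall>b\<in>B. v (q b) = 0" using spec[OF L[unfolded kinj_def], of "\<lambda>b. v (q b)"] by simp
    moreover obtain b where "b \<in> B" "q b = j" using q j by (metis bij_betw_iff_bijections)
    ultimately show "v j = 0" by auto
  qed
next
  assume L: "kinj X R S"
  show "kinj (\<lambda>a b. X (p a) (q b)) A B" unfolding kinj_def
  proof (intro allI impI ballI)
    fix w b assume H: "\<forall>a\<in>A. (\<Sum>b\<in>B. X (p a) (q b) * w b) = 0" and b: "b \<in> B"
    define v where "v j = w (the_inv_into B q j)" for j
    have vq: "v (q b') = w b'" if "b' \<in> B" for b'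
      unfolding v_def using the_inv_into_f_f[OF bij_betw_imp_inj_on[OF q] that] by simp
    have "\<forall>i\<in>R. (\<Sum>j\<in>S. X i j * v j) = 0"
    proof
      fix i assume i: "i \<in> R"
      obtain a where a: "a \<in> A" "p a = i" using p i by (metis bij_betw_iff_bijections)
      have "(\<Sum>j\<in>S. X i j * v j) = (\<Sum>b\<in>B. X i (q b) * v (q b))"
        by (rule sum.reindex_bij_betw[OF q, symmetric])
      also have "\<dots> = (\<Sum>b\<in>B. X (p a) (q b) * w b)" using vq a by (auto intro: sum.cong)
      also have "\<dots> = 0" using H a by blast
      finally show "(\<Sum>j\<in>S. X i j * v j) = 0" .
    qed
    then have "\<forall>j\<in>S. v j = 0" using L unfolding kinj_def by blast
    then show "w b = 0" using vq[OF b] b q bij_betwE by fastforce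
  qed
qed

lemma K0:
  fixes h :: "nat \<Rightarrow> nat \<Rightarrow> 'a::field"
  shows "det (mat k k (\<lambda>(a,b). h a b)) \<noteq> 0 \<longleftrightarrow> kinj h {0..<k} {0..<k}"
proof -
  let ?A = "mat k k (\<lambda>(a,b). h a b)"
  have A: "?A \<in> carrier_mat k k" by simp
  have mv: "(?A *\<^sub>v v) $ a = (\<Sum>b\<in>{0..<k}. h a b * v $ b)" if "a < k" "v \<in> carrier_vec k" for a v
    using that by (auto simp: scalar_prod_def intro!: sum.cong)
  show ?thesis
  proof
    assume d: "det ?A \<noteq> 0"
    show "kinj h {0..<k} {0..<k}" unfolding kinj_def
    proof (intro allI impI ballI, rule ccontr)
      fix v j assume H: "\<forall>i\<in>{0..<k}. (\<Sum>j\<in>{0..<k}. h i j * v j) = 0" and j: "j \<in> {0..<k}" and nz: "v j \<noteq> 0"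
      let ?u = "vec k v"
      have "?u \<in> carrier_vec k" by simp
      moreover have "?u \<noteq> 0\<^sub>v k" using j nz by (metis atLeastLessThan_iff index_vec index_zero_vec(1))
      moreover have "?A *\<^sub>v ?u = 0\<^sub>v k"
        by (rule eq_vecI, subst mv, auto simp: H[rule_format])
      ultimately show False using d det_0_iff_vec_prod_zero_field[OF A] by blast
    qed
  next
    assume K: "kinj h {0..<k} {0..<k}"
    show "det ?A \<noteq> 0"
    proof
      assume "det ?A = 0"
      then obtain u where u: "u \<in> carrier_vec k" "u \<noteq> 0\<^sub>v k" "?A *\<^sub>v u = 0\<^sub>v k"
        using det_0_iff_vec_prod_zero_field[OF A] by blast
      have "\<forall>i\<in>{0..<k}. (\<Sum>j\<in>{0..<k}. h i j * (\<lambda>b. u $ b) j) = 0"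
      proof
        fix i assume "i \<in> {0..<k}"
        then show "(\<Sum>j\<in>{0..<k}. h i j * (\<lambda>b. u $ b) j) = 0" using mv[of i u] u
          by (metis atLeastLessThan_iff index_zero_vec(1))
      qed
      then have "\<forall>j\<in>{0..<k}. u $ j = 0" using K unfolding kinj_def by blast
      then have "u = 0\<^sub>v k" using u(1) by (intro eq_vecI, auto)
      then show False using u(2) by simp
    qed
  qed
qed

lemma submatrix_pick_eq:
  assumes X: "X \<in> carrier_mat n N"
  shows "submatrix X R S = mat (card {i. i<n \<and> i\<in>R}) (card {j. j<N \<and> j\<in>S})
           (\<lambda>(a,b). X $$ (pick {i. i<n \<and> i\<in>R} a, pick {j. j<N \<and> j\<in>S} b))"
  using X by (intro eq_matI) (auto simp: dim_submatrix submatrix_index pick_reduce_set)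

lemma NS:
  assumes X: "X \<in> carrier_mat n N"
  shows "det (submatrix X R S) \<noteq> 0 \<longleftrightarrow>
     card {i. i<n \<and> i\<in>R} = card {j. j<N \<and> j\<in>S} \<and>
     kinj (\<lambda>i j. X $$ (i,j)) {i. i<n \<and> i\<in>R} {j. j<N \<and> j\<in>S}"
proof -
  let ?R = "{i. i<n \<and> i\<in>R}" and ?S = "{j. j<N \<and> j\<in>S}"
  have fR: "finite ?R" and fS: "finite ?S" by auto
  show ?thesis
  proof (cases "card ?R = card ?S")
    case False
    then show ?thesis unfolding submatrix_pick_eq[OF X] det_def by simp
  next
    case True
    have "det (submatrix X R S) \<noteq> 0 \<longleftrightarrow>
       kinj (\<lambda>a b. X $$ (pick ?R a, pick ?S b)) {0..<card ?S} {0..<card ?S}"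
      unfolding submatrix_pick_eq[OF X] True by (rule K0)
    also have "\<dots> \<longleftrightarrow> kinj (\<lambda>i j. X $$ (i,j)) ?R ?S"
      using KT[OF pick_bij[OF fR] pick_bij[OF fS], of "\<lambda>i j. X $$ (i,j)"] True by simp
    finally show ?thesis using True by simp
  qed
qed

lemma det_row_split:
  fixes f g :: "nat \<Rightarrow> nat \<Rightarrow> 'a::comm_ring_1"
  shows "det (mat k k (\<lambda>(a,b). f a b + g a b)) =
    (\<Sum>T\<in>Pow {0..<k}. det (mat k k (\<lambda>(a,b). if a \<in> T then f a b else g a b)))"
proof -
  let ?P = "{p. p permutes {0..<k}}"
  have pin: "p a < k" if "p \<in> ?P" "a < k" for p a
    using that permutes_in_image[of p "{0..<k}" a] by auto
  have "det (mat k k (\<lambda>(a,b). f a b + g a b)) =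
     (\<Sum>p\<in>?P. signof p * (\<Prod>a\<in>{0..<k}. f a (p a) + g a (p a)))"
    by (subst det_def'[of _ k], simp, intro sum.cong refl arg_cong[where f="\<lambda>x. _ * x"] prod.cong, auto simp: pin)
  also have "\<dots> = (\<Sum>p\<in>?P. signof p * (\<Sum>T\<in>Pow {0..<k}. (\<Prod>a\<in>T. f a (p a)) * (\<Prod>a\<in>{0..<k}-T. g a (p a))))"
    by (simp add: prod_add)
  also have "\<dots> = (\<Sum>T\<in>Pow {0..<k}. \<Sum>p\<in>?P. signof p * ((\<Prod>a\<in>T. f a (p a)) * (\<Prod>a\<in>{0..<k}-T. g a (p a))))"
    by (simp add: sum_distrib_left sum.swap[of _ ?P])
  also have "\<dots> = (\<Sum>T\<in>Pow {0..<k}. det (mat k k (\<lambda>(a,b). if a \<in> T then f a b else g a b)))"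
  proof (rule sum.cong[OF refl])
    fix T assume T: "T \<in> Pow {0..<k}"
    show "(\<Sum>p\<in>?P. signof p * ((\<Prod>a\<in>T. f a (p a)) * (\<Prod>a\<in>{0..<k}-T. g a (p a)))) =
      det (mat k k (\<lambda>(a,b). if a \<in> T then f a b else g a b))"
    proof (subst det_def'[of _ k], simp, intro sum.cong refl arg_cong[where f="\<lambda>x. _ * x"])
      fix p assume p: "p \<in> ?P"
      have "(\<Prod>i = 0..<k. mat k k (\<lambda>(a,b). if a \<in> T then f a b else g a b) $$ (i, p i))
          = (\<Prod>i \<in> {0..<k}. if i \<in> T then f i (p i) else g i (p i))"
        by (intro prod.cong refl, auto simp: pin[OF p])
      also have "\<dots> = (\<Prod>a\<in>T. f a (p a)) * (\<Prod>a\<in>{0..<k}-T. g a (p a))"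
        using T by (subst prod.If_cases, auto intro!: arg_cong2[where f="(*)"] prod.cong)
      finally show "(\<Prod>a\<in>T. f a (p a)) * (\<Prod>a\<in>{0..<k}-T. g a (p a)) =
         (\<Prod>i = 0..<k. mat k k (\<lambda>(a,b). if a \<in> T then f a b else g a b) $$ (i, p i))" by simp
    qed
  qed
  finally show ?thesis .
qed

lemma det_transp_mat:
  fixes h :: "nat \<Rightarrow> nat \<Rightarrow> 'a::comm_ring_1"
  shows "det (mat k k (\<lambda>(a,b). h a b)) = det (mat k k (\<lambda>(a,b). h b a))"
proof -
  have "mat k k (\<lambda>(a,b). h b a) = transpose_mat (mat k k (\<lambda>(a,b). h a b))"
    by (rule eq_matI) auto
  then show ?thesis using det_transpose[of "mat k k (\<lambda>(a,b). h a b)" k] by simp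
qed

lemma sum_nonzero_ex: "sum f A \<noteq> 0 \<Longrightarrow> \<exists>x\<in>A. f x \<noteq> 0"
  by (metis sum.neutral)

lemma local_split:
  fixes f g :: "nat \<Rightarrow> nat \<Rightarrow> 'a::field"
  assumes d: "det (mat k k (\<lambda>(a,b). f a b + g a b)) \<noteq> 0"
  shows "\<exists>T U. T \<subseteq> {0..<k} \<and> U \<subseteq> {0..<k} \<and> card T = card U \<and> kinj f T U \<and>
     kinj g ({0..<k}-T) ({0..<k}-U)"
proof -
  obtain T where T: "T \<subseteq> {0..<k}" and dT: "det (mat k k (\<lambda>(a,b). if a \<in> T then f a b else g a b)) \<noteq> 0"
    using sum_nonzero_ex[OF d[unfolded det_row_split]] by auto
  define f2 where "f2 b a = (if a \<in> T then f a b else 0)" for b a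
  define g2 where "g2 b a = (if a \<in> T then 0 else g a b)" for b a
  have "det (mat k k (\<lambda>(a,b). if a \<in> T then f a b else g a b)) = det (mat k k (\<lambda>(b,a). f2 b a + g2 b a))"
    unfolding det_transp_mat[of k "\<lambda>a b. if a \<in> T then f a b else g a b"] f2_def g2_def
    by (intro arg_cong[where f=det] eq_matI) auto
  with dT obtain U where U: "U \<subseteq> {0..<k}" and dU: "det (mat k k (\<lambda>(b,a). if b \<in> U then f2 b a else g2 b a)) \<noteq> 0"
    using sum_nonzero_ex[of _ "Pow {0..<k}"] unfolding det_row_split by auto
  define Y where "Y a b = (if b \<in> U then (if a \<in> T then f a b else 0) else (if a \<in> T then 0 else g a b))" for a b
  have dY: "det (mat k k (\<lambda>(a,b). Y a b)) \<noteq> 0"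
  proof -
    have "det (mat k k (\<lambda>(b,a). if b \<in> U then f2 b a else g2 b a)) = det (mat k k (\<lambda>(a,b). Y a b))"
      unfolding det_transp_mat[of k "\<lambda>b a. if b \<in> U then f2 b a else g2 b a"]
      by (intro arg_cong[where f=det] eq_matI) (auto simp: Y_def f2_def g2_def)
    then show ?thesis using dU by simp
  qed
  have KY: "kinj Y {0..<k} {0..<k}" using dY K0 by blast
  have kf: "kinj f T U" unfolding kinj_def
  proof (intro allI impI ballI)
    fix v j assume H: "\<forall>i\<in>T. (\<Sum>j\<in>U. f i j * v j) = 0" and j: "j \<in> U"
    define w where "w b = (if b \<in> U then v b else 0)" for b
    have "\<forall>i\<in>{0..<k}. (\<Sum>b\<in>{0..<k}. Y i b * w b) = 0"
    proof
      fix i assume i: "i \<in> {0..<k}"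
      have "(\<Sum>b\<in>{0..<k}. Y i b * w b) = (\<Sum>b\<in>{0..<k}. if b \<in> U then (if i \<in> T then f i b * v b else 0) else 0)"
        by (intro sum.cong refl) (auto simp: Y_def w_def)
      also have "\<dots> = (\<Sum>b\<in>{0..<k} \<inter> U. (if i \<in> T then f i b * v b else 0))"
        by (rule sum.inter_restrict[symmetric]) simp
      also have "\<dots> = 0" using H U by (cases "i \<in> T") (auto simp: Int_absorb1)
      finally show "(\<Sum>b\<in>{0..<k}. Y i b * w b) = 0" .
    qed
    then have "w j = 0" using spec[OF KY[unfolded kinj_def], of w] j U by auto
    then show "v j = 0" using j by (simp add: w_def)
  qed
  have kg: "kinj g ({0..<k}-T) ({0..<k}-U)" unfolding kinj_def
  proof (intro allI impI ballI)
    fix v j assume H: "\<forall>i\<in>{0..<k}-T. (\<Sum>j\<in>{0..<k}-U. g i j * v j) = 0" and j: "j \<in> {0..<k}-U"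
    define w where "w b = (if b \<in> U then 0 else v b)" for b
    have "\<forall>i\<in>{0..<k}. (\<Sum>b\<in>{0..<k}. Y i b * w b) = 0"
    proof
      fix i assume i: "i \<in> {0..<k}"
      have "(\<Sum>b\<in>{0..<k}. Y i b * w b) = (\<Sum>b\<in>{0..<k}. if b \<in> -U then (if i \<in> T then 0 else g i b * v b) else 0)"
        by (intro sum.cong refl) (auto simp: Y_def w_def)
      also have "\<dots> = (\<Sum>b\<in>{0..<k} \<inter> -U. (if i \<in> T then 0 else g i b * v b))"
        by (rule sum.inter_restrict[symmetric]) simp
      also have "\<dots> = 0" using H i by (cases "i \<in> T") (auto simp: Diff_eq)
      finally show "(\<Sum>b\<in>{0..<k}. Y i b * w b) = 0" .
    qed
    then have "w j = 0" using spec[OF KY[unfolded kinj_def], of w] j by auto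
    then show "v j = 0" using j by (simp add: w_def)
  qed
  obtain p where p: "p permutes {0..<k}" and pr: "(\<Prod>i = 0..<k. mat k k (\<lambda>(a,b). Y a b) $$ (i, p i)) \<noteq> 0"
    using sum_nonzero_ex[OF dY[unfolded det_def'[of "mat k k (\<lambda>(a,b). Y a b)" k, OF mat_carrier]]] by auto
  have pin: "p a < k" if "a < k" for a using that permutes_in_image[OF p, of a] by auto
  have Ynz: "Y a (p a) \<noteq> 0" if "a < k" for a
  proof -
    have "mat k k (\<lambda>(a,b). Y a b) $$ (a, p a) \<noteq> 0" using pr that by (auto simp: prod_zero_iff)
    then show ?thesis using that pin[OF that] by simp
  qed
  have inj: "inj_on p X" for X using p permutes_inj inj_on_subset by blast
  have "p ` T \<subseteq> U"
  proof
    fix x assume "x \<in> p ` T"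
    then obtain a where a: "a \<in> T" "x = p a" by blast
    then have "a < k" using T by auto
    then show "x \<in> U" using Ynz[of a] a unfolding Y_def by (auto split: if_splits)
  qed
  then have c1: "card T \<le> card U" using card_image[OF inj] card_mono[OF _ \<open>p ` T \<subseteq> U\<close>] U
    by (metis finite_atLeastLessThan finite_subset)
  have "p ` ({0..<k}-T) \<subseteq> {0..<k}-U"
  proof
    fix x assume "x \<in> p ` ({0..<k}-T)"
    then obtain a where a: "a \<in> {0..<k}-T" "x = p a" by blast
    then have "a < k" by auto
    then show "x \<in> {0..<k}-U" using Ynz[of a] pin[of a] a unfolding Y_def by (auto split: if_splits)
  qed
  then have c2: "card ({0..<k}-T) \<le> card ({0..<k}-U)" using card_image[OF inj] card_mono[OF _ \<open>p ` ({0..<k}-T) \<subseteq> {0..<k}-U\<close>]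
    by (metis finite_Diff finite_atLeastLessThan)
  have "card T = card U" using c1 c2 T U card_Diff_subset[of T "{0..<k}"] card_Diff_subset[of U "{0..<k}"]
    card_mono[OF _ T] card_mono[OF _ U] by (simp add: finite_subset)
  then show ?thesis using T U kf kg by blast
qed

lemma split_general:
  fixes f g :: "nat \<Rightarrow> nat \<Rightarrow> 'a::field"
  assumes fR: "finite R" and fC: "finite C" and cc: "card R = card C"
    and K: "kinj (\<lambda>i j. f i j + g i j) R C"
  shows "\<exists>T U. T \<subseteq> R \<and> U \<subseteq> C \<and> card T = card U \<and> kinj f T U \<and> kinj g (R-T) (C-U)"
proof -
  define k where "k = card C"
  have bR: "bij_betw (pick R) {0..<k} R" using pick_bij[OF fR] cc k_def by simp
  have bC: "bij_betw (pick C) {0..<k} C" using pick_bij[OF fC] k_def by simp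
  have "kinj (\<lambda>a b. f (pick R a) (pick C b) + g (pick R a) (pick C b)) {0..<k} {0..<k}"
    using KT[OF bR bC, of "\<lambda>i j. f i j + g i j"] K by simp
  then have "det (mat k k (\<lambda>(a,b). f (pick R a) (pick C b) + g (pick R a) (pick C b))) \<noteq> 0"
    using K0 by blast
  from local_split[OF this] obtain T U where T: "T \<subseteq> {0..<k}" and U: "U \<subseteq> {0..<k}"
    and cTU: "card T = card U" and kf: "kinj (\<lambda>a b. f (pick R a) (pick C b)) T U"
    and kg: "kinj (\<lambda>a b. g (pick R a) (pick C b)) ({0..<k}-T) ({0..<k}-U)" by blast
  have iR: "inj_on (pick R) {0..<k}" and iC: "inj_on (pick C) {0..<k}"
    using bR bC bij_betw_def by blast+
  have b1: "bij_betw (pick R) T (pick R ` T)" using inj_on_subset[OF iR T] inj_on_imp_bij_betw by blast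
  have b2: "bij_betw (pick C) U (pick C ` U)" using inj_on_subset[OF iC U] inj_on_imp_bij_betw by blast
  have b3: "bij_betw (pick R) ({0..<k}-T) (R - pick R ` T)"
  proof -
    have "pick R ` ({0..<k}-T) = R - pick R ` T"
      using inj_on_image_set_diff[OF iR _ T] bR bij_betw_def by (metis Diff_subset)
    then show ?thesis using inj_on_subset[OF iR, of "{0..<k}-T"] inj_on_imp_bij_betw by fastforce
  qed
  have b4: "bij_betw (pick C) ({0..<k}-U) (C - pick C ` U)"
  proof -
    have "pick C ` ({0..<k}-U) = C - pick C ` U"
      using inj_on_image_set_diff[OF iC _ U] bC bij_betw_def by (metis Diff_subset)
    then show ?thesis using inj_on_subset[OF iC, of "{0..<k}-U"] inj_on_imp_bij_betw by fastforce
  qed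
  have "kinj f (pick R ` T) (pick C ` U)" using KT[OF b1 b2, of f] kf by simp
  moreover have "kinj g (R - pick R ` T) (C - pick C ` U)" using KT[OF b3 b4, of g] kg by simp
  moreover have "card (pick R ` T) = card (pick C ` U)"
    using cTU bij_betw_same_card[OF b1] bij_betw_same_card[OF b2] by simp
  moreover have "pick R ` T \<subseteq> R" "pick C ` U \<subseteq> C" using T U bR bC bij_betwE by blast+
  ultimately show ?thesis by blast
qed



lemma (in vec_space) max_indpt_cols:
  "\<exists>S. maximal S (\<lambda>T. T \<subseteq> set (cols A) \<and> lin_indpt T)"
    using maximal_exists[of "(\<lambda>T. T \<subseteq> set (cols A) \<and> lin_indpt T)" "card (set (cols A))" "{}"]
    by (meson List.finite_set card_mono empty_iff empty_subsetI finite_lin_indpt2 rev_finite_subset)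

lemma (in vec_space) rank_le_nr:
  assumes "A \<in> carrier_mat n nc"
  shows "rank A \<le> n"
proof -
  obtain S where S: "maximal S (\<lambda>T. T \<subseteq> set (cols A) \<and> lin_indpt T)"
    using max_indpt_cols by blast
  have r: "rank A = card S" using rank_card_indpt[OF assms S] .
  have S1: "S \<subseteq> set (cols A)" and S2: "lin_indpt S" using S unfolding maximal_def by simp_all
  have "S \<subseteq> carrier_vec n" using S1 cols_dim[of A] assms by auto
  then have "card S \<le> dim" using li_le_dim(2)[OF fin_dim] S2 by simp
  then show ?thesis using r dim_is_n by simp
qed
lemma col_submatrix_UNIV:
  assumes "A \<in> carrier_mat n nc" "b < card {j. j < nc \<and> j \<in> C}"
  shows "col (submatrix A UNIV C) b = col A (pick C b)"
proof -
  have "card {i. i < dim_row A \<and> i \<in> UNIV} = n" using assms by simp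
  moreover have "pick C b < nc" using pick_le[OF assms(2)] .
  ultimately show ?thesis using assms
    by (intro eq_vecI) (auto simp: dim_submatrix submatrix_index pick_UNIV)
qed

lemma (in vec_space) rank_minor:
  assumes A: "A \<in> carrier_mat n nc" and r: "rank A = n"
  shows "\<exists>C. C \<subseteq> {0..<nc} \<and> card C = n \<and> det (submatrix A UNIV C) \<noteq> 0"
proof -
  obtain S where S: "maximal S (\<lambda>T. T \<subseteq> set (cols A) \<and> lin_indpt T)"
    using max_indpt_cols by blast
  have cS: "card S = n" using rank_card_indpt[OF A S] r by simp
  have Ssub: "S \<subseteq> set (cols A)" and li: "lin_indpt S" using S unfolding maximal_def by simp_all
  have ex: "\<exists>j. j < nc \<and> col A j = s" if "s \<in> S" for s
  proof -
    have "s \<in> set (cols A)" using Ssub that by blast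
    then obtain j where "j < length (cols A)" "cols A ! j = s" by (meson in_set_conv_nth)
    then show ?thesis using A by auto
  qed
  define ix where "ix s = (SOME j. j < nc \<and> col A j = s)" for s
  have ix: "ix s < nc \<and> col A (ix s) = s" if "s \<in> S" for s
    using someI_ex[OF ex[OF that]] unfolding ix_def .
  define C where "C = ix ` S"
  have inj: "inj_on ix S"
  proof (rule inj_onI)
    fix x y assume "x \<in> S" "y \<in> S" "ix x = ix y"
    then show "x = y" using ix[of x] ix[of y] by metis
  qed
  have cC: "card C = n" unfolding C_def using card_image[OF inj] cS by simp
  have Csub: "C \<subseteq> {0..<nc}" unfolding C_def using ix by auto
  have C': "{j. j < nc \<and> j \<in> C} = C" using Csub by auto
  let ?B = "submatrix A UNIV C"
  have dB: "dim_row ?B = n" "dim_col ?B = n" using A cC C' by (auto simp: dim_submatrix)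
  have B: "?B \<in> carrier_mat n n" using dB by auto
  have fC: "finite C" using Csub finite_subset by blast
  have bC: "bij_betw (pick C) {0..<n} C" using pick_bij[OF fC] cC by simp
  have colsB: "set (cols ?B) = S"
  proof -
    have "set (cols ?B) = (\<lambda>b. col ?B b) ` {0..<n}" using dB by (simp add: cols_def)
    also have "\<dots> = (\<lambda>b. col A (pick C b)) ` {0..<n}"
      using col_submatrix_UNIV[OF A] C' cC by (intro image_cong refl) simp
    also have "\<dots> = (\<lambda>j. col A j) ` (pick C ` {0..<n})" by (simp add: image_image)
    also have "pick C ` {0..<n} = C" using bC by (simp add: bij_betw_def)
    also have "(\<lambda>j. col A j) ` C = S"
    proof -
      have "(\<lambda>j. col A j) ` C = (\<lambda>s. col A (ix s)) ` S" unfolding C_def by (simp add: image_image)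
      also have "\<dots> = (\<lambda>s. s) ` S" using ix by (intro image_cong refl) auto
      finally show ?thesis by simp
    qed
    finally show ?thesis .
  qed
  have "length (cols ?B) = n" using dB by simp
  then have dist: "distinct (cols ?B)" using colsB cS card_distinct[of "cols ?B"] by simp
  have "rank ?B = n" using lin_indpt_full_rank[OF B dist] colsB li by simp
  then have "det ?B \<noteq> 0" using det_rank_iff[OF B] by simp
  then show ?thesis using Csub cC by blast
qed

lemma kinj_cong:
  assumes "\<And>i j. i \<in> R \<Longrightarrow> j \<in> S \<Longrightarrow> X i j = Y i j"
  shows "kinj X R S = kinj Y R S"
  unfolding kinj_def using assms by (simp cong: sum.cong)

lemma kinj_scale:
  fixes X Y :: "nat \<Rightarrow> nat \<Rightarrow> 'a::field"
  assumes K: "kinj X R S" and r: "\<And>i. i \<in> R \<Longrightarrow> r i \<noteq> 0" and c: "\<And>j. j \<in> S \<Longrightarrow> c j \<noteq> 0"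
    and e: "\<And>i j. i \<in> R \<Longrightarrow> j \<in> S \<Longrightarrow> X i j = r i * Y i j * c j"
  shows "kinj Y R S"
  unfolding kinj_def
proof (intro allI impI ballI)
  fix v j assume H: "\<forall>i\<in>R. (\<Sum>j\<in>S. Y i j * v j) = 0" and j: "j \<in> S"
  define w where "w j = v j / c j" for j
  have "\<forall>i\<in>R. (\<Sum>j\<in>S. X i j * w j) = 0"
  proof
    fix i assume i: "i \<in> R"
    have "(\<Sum>j\<in>S. X i j * w j) = (\<Sum>j\<in>S. r i * (Y i j * v j))"
      using e[OF i] c by (intro sum.cong refl) (simp add: w_def)
    also have "\<dots> = 0" using H i by (simp add: sum_distrib_left[symmetric])
    finally show "(\<Sum>j\<in>S. X i j * w j) = 0" .
  qed
  then have "w j = 0" using spec[OF K[unfolded kinj_def], of w] j by auto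
  then show "v j = 0" using c[OF j] by (simp add: w_def)
qed

lemma poly_det_mat:
  fixes Np :: "nat \<Rightarrow> nat \<Rightarrow> 'a::comm_ring_1 poly"
  shows "poly (det (mat k k (\<lambda>(a,b). Np a b))) y = det (mat k k (\<lambda>(a,b). poly (Np a b) y))"
proof -
  have h: "comm_ring_hom (\<lambda>p. poly p y)" by (unfold_locales) auto
  have "map_mat (\<lambda>p. poly p y) (mat k k (\<lambda>(a,b). Np a b)) = mat k k (\<lambda>(a,b). poly (Np a b) y)"
    by (rule eq_matI) auto
  then show ?thesis using comm_ring_hom.hom_det[OF h, of "mat k k (\<lambda>(a,b). Np a b)"] by simp
qed

lemma exists_t:
  fixes F E :: "nat \<Rightarrow> nat \<Rightarrow> complex"
  assumes fin: "finite R1" "finite R2" "finite C1" "finite C2"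
    and disj: "R1 \<inter> R2 = {}" "C1 \<inter> C2 = {}"
    and cc: "card (R1 \<union> R2) = card (C1 \<union> C2)"
    and KF: "kinj F R1 C1" and KE: "kinj E R2 C2"
    and Ez: "\<And>i j. \<not> (i \<in> R2 \<and> j \<in> C2) \<Longrightarrow> E i j = 0"
  shows "\<exists>t::real. kinj (\<lambda>i j. F i j + of_real t * E i j) (R1 \<union> R2) (C1 \<union> C2)"
proof -
  define R where "R = R1 \<union> R2"
  define C where "C = C1 \<union> C2"
  define k where "k = card C"
  have fR: "finite R" and fC: "finite C" using fin by (auto simp: R_def C_def)
  have bR: "bij_betw (pick R) {0..<k} R" using pick_bij[OF fR] cc k_def R_def C_def by simp
  have bC: "bij_betw (pick C) {0..<k} C" using pick_bij[OF fC] k_def by simp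
  define N0 where "N0 i j = (if i \<in> R1 \<and> j \<in> C1 then F i j else 0) + E i j" for i j
  have KN0: "kinj N0 R C" unfolding kinj_def
  proof (intro allI impI ballI)
    fix v j assume H: "\<forall>i\<in>R. (\<Sum>j\<in>C. N0 i j * v j) = 0" and j: "j \<in> C"
    have split: "(\<Sum>j\<in>C. N0 i j * v j) = (\<Sum>j\<in>C1. N0 i j * v j) + (\<Sum>j\<in>C2. N0 i j * v j)" for i
      unfolding C_def using fin disj by (intro sum.union_disjoint) auto
    have "\<forall>i\<in>R1. (\<Sum>j\<in>C1. F i j * v j) = 0"
    proof
      fix i assume i: "i \<in> R1"
      then have iR2: "i \<notin> R2" using disj by blast
      have z: "(\<Sum>j\<in>C2. N0 i j * v j) = 0"
        using i iR2 disj Ez by (auto simp: N0_def intro!: sum.neutral)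
      have "(\<Sum>j\<in>C1. F i j * v j) = (\<Sum>j\<in>C1. N0 i j * v j)"
        using i iR2 disj Ez by (auto simp: N0_def intro!: sum.cong)
      then have "(\<Sum>j\<in>C1. F i j * v j) = (\<Sum>j\<in>C1. N0 i j * v j) + (\<Sum>j\<in>C2. N0 i j * v j)"
        using z by simp
      also have "\<dots> = 0" using H i split[of i] by (auto simp: R_def)
      finally show "(\<Sum>j\<in>C1. F i j * v j) = 0" .
    qed
    then have v1: "\<forall>j\<in>C1. v j = 0" using spec[OF KF[unfolded kinj_def], of v] by blast
    have "\<forall>i\<in>R2. (\<Sum>j\<in>C2. E i j * v j) = 0"
    proof
      fix i assume i: "i \<in> R2"
      then have iR1: "i \<notin> R1" using disj by blast
      have z: "(\<Sum>j\<in>C1. N0 i j * v j) = 0"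
        using i iR1 disj Ez v1 by (auto simp: N0_def intro!: sum.neutral)
      have "(\<Sum>j\<in>C2. E i j * v j) = (\<Sum>j\<in>C2. N0 i j * v j)"
        using i iR1 disj Ez by (auto simp: N0_def intro!: sum.cong)
      then have "(\<Sum>j\<in>C2. E i j * v j) = (\<Sum>j\<in>C1. N0 i j * v j) + (\<Sum>j\<in>C2. N0 i j * v j)"
        using z by simp
      also have "\<dots> = 0" using H i split[of i] by (auto simp: R_def)
      finally show "(\<Sum>j\<in>C2. E i j * v j) = 0" .
    qed
    then have v2: "\<forall>j\<in>C2. v j = 0" using spec[OF KE[unfolded kinj_def], of v] by blast
    show "v j = 0" using j v1 v2 by (auto simp: C_def)
  qed
  define e where "e i j = (if i \<in> R2 then 1 else 0) + (if j \<in> C2 then 1 else (0::nat))" for i j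
  define Np where "Np i j = monom (F i j) (e i j) + [:E i j:]" for i j
  have pNp: "poly (Np i j) x = F i j * x ^ e i j + E i j" for i j x by (simp add: Np_def poly_monom)
  define P where "P = det (mat k k (\<lambda>(a,b). Np (pick R a) (pick C b)))"
  have pP: "poly P x = det (mat k k (\<lambda>(a,b). F (pick R a) (pick C b) * x ^ e (pick R a) (pick C b) + E (pick R a) (pick C b)))" for x
    unfolding P_def poly_det_mat pNp ..
  have "poly P 0 = det (mat k k (\<lambda>(a,b). N0 (pick R a) (pick C b)))"
    unfolding pP
  proof (intro arg_cong[where f=det] eq_matI, simp_all)
    fix a b assume a: "a < k" and b: "b < k"
    have "pick R a \<in> R" "pick C b \<in> C" using a b bR bC bij_betwE by fastforce+
    then show "F (pick R a) (pick C b) * 0 ^ e (pick R a) (pick C b) + E (pick R a) (pick C b) = N0 (pick R a) (pick C b)"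
      using disj by (auto simp: N0_def e_def R_def C_def)
  qed
  also have "\<dots> \<noteq> 0" using K0 KT[OF bR bC, of N0] KN0 by blast
  finally have "poly P 0 \<noteq> 0" .
  then have "P \<noteq> 0" by auto
  then have "finite {x. poly P x = 0}" by (rule poly_roots_finite)
  then have "finite (of_real -` {x. poly P x = 0} :: real set)"
    by (rule finite_vimageI) (simp add: inj_on_def)
  then have "finite (insert 0 (of_real -` {x. poly P x = 0}) :: real set)" by simp
  then obtain y :: real where y: "y \<notin> insert 0 (of_real -` {x. poly P x = 0})"
    using ex_new_if_finite[OF infinite_UNIV_char_0] by blast
  then have y0: "y \<noteq> 0" and py: "poly P (of_real y) \<noteq> 0" by auto
  define X where "X i j = F i j * of_real y ^ e i j + E i j" for i j
  have "kinj (\<lambda>a b. X (pick R a) (pick C b)) {0..<k} {0..<k}"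
    using py unfolding pP X_def using K0 by blast
  then have KX: "kinj X R C" using KT[OF bR bC, of X] by simp
  define t where "t = 1 / y^2"
  define rr where "rr i = (of_real y :: complex) ^ (if i \<in> R2 then 1 else 0)" for i
  define cc' where "cc' j = (of_real y :: complex) ^ (if j \<in> C2 then 1 else 0)" for j
  have "kinj (\<lambda>i j. F i j + of_real t * E i j) R C"
  proof (rule kinj_scale[OF KX])
    show "rr i \<noteq> 0" for i using y0 by (simp add: rr_def)
    show "cc' j \<noteq> 0" for j using y0 by (simp add: cc'_def)
    fix i j assume "i \<in> R" "j \<in> C"
    have rc: "rr i * cc' j = of_real y ^ e i j" by (simp add: rr_def cc'_def e_def power_add)
    show "X i j = rr i * (F i j + complex_of_real t * E i j) * cc' j"
    proof (cases "i \<in> R2 \<and> j \<in> C2")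
      case True
      then have "rr i * cc' j = of_real y ^ 2" using rc by (simp add: e_def power2_eq_square)
      moreover have "complex_of_real t * of_real y ^ 2 = 1" using y0 by (simp add: t_def field_simps)
      ultimately have q: "rr i * cc' j = of_real y ^ 2" "complex_of_real t * (rr i * cc' j) = 1" by simp_all
      have "rr i * (F i j + complex_of_real t * E i j) * cc' j
          = (rr i * cc' j) * F i j + (complex_of_real t * (rr i * cc' j)) * E i j" by (simp add: algebra_simps)
      also have "\<dots> = of_real y ^ 2 * F i j + 1 * E i j" unfolding q(2) unfolding q(1) ..
      also have "\<dots> = F i j * of_real y ^ e i j + E i j" using True by (simp add: e_def mult.commute power2_eq_square)
      finally show ?thesis unfolding X_def by simp
    next
      case False
      then show ?thesis unfolding X_def using Ez[OF False] rc by (simp add: algebra_simps)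
    qed
  qed
  then show ?thesis unfolding R_def C_def by blast
qed

lemma mrank_le: "M \<in> carrier_mat r c \<Longrightarrow> mrank M \<le> r"
  unfolding mrank_def using vec_space.rank_le_nr[of M r c] by simp

lemma GR: "generic_rank P = dim_row P \<longleftrightarrow>
   (\<exists>M \<in> realizations P. mrank (map_mat complex_of_real M) = dim_row P)"
proof -
  let ?S = "{mrank (map_mat complex_of_real M) | M. M \<in> realizations P}"
  have le: "x \<le> dim_row P" if xS: "x \<in> ?S" for x
  proof -
    obtain M where M: "M \<in> realizations P" "x = mrank (map_mat complex_of_real M)" using xS by blast
    then have "map_mat complex_of_real M \<in> carrier_mat (dim_row P) (dim_col P)"
      by (auto simp: realizations_def)
    then show ?thesis using mrank_le M(2) by blast
  qed
  have fin: "finite ?S" using le by (meson atMost_iff finite_atMost finite_subset subsetI)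
  have "0\<^sub>m (dim_row P) (dim_col P) \<in> realizations P" by (auto simp: realizations_def)
  then have ne: "?S \<noteq> {}" by blast
  show ?thesis unfolding generic_rank_def
  proof
    assume "Max ?S = dim_row P"
    then have "dim_row P \<in> ?S" using Max_in[OF fin ne] by simp
    then show "\<exists>M \<in> realizations P. mrank (map_mat complex_of_real M) = dim_row P" by auto
  next
    assume "\<exists>M \<in> realizations P. mrank (map_mat complex_of_real M) = dim_row P"
    then have "dim_row P \<in> ?S" by (metis (mono_tags, lifting) mem_Collect_eq)
    then show "Max ?S = dim_row P" using Max_eqI[OF fin le] by blast
  qed
qed



lemma Mact_entry:
  fixes A B dA dB :: "real mat"
  assumes "A \<in> carrier_mat n n" "B \<in> carrier_mat n m" "dA \<in> carrier_mat n n" "dB \<in> carrier_mat n m"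
    and i: "i < n" and j: "j < n + m"
  shows "hcat (lam \<cdot>\<^sub>m 1\<^sub>m n - map_mat complex_of_real (A + dA)) (map_mat complex_of_real (B + dB)) $$ (i,j)
    = hcat (lam \<cdot>\<^sub>m 1\<^sub>m n - map_mat complex_of_real A) (map_mat complex_of_real B) $$ (i,j)
      + complex_of_real (if j < n then - dA $$ (i,j) else dB $$ (i, j - n))"
  using assms by (auto simp: hcat_def)

lemma hcat_carrier: "X \<in> carrier_mat n a \<Longrightarrow> Y \<in> carrier_mat n b \<Longrightarrow> hcat X Y \<in> carrier_mat n (a + b)"
  by (auto simp: hcat_def)

theorem lemma2:
  fixes A :: "real mat" and B :: "real mat" and PA :: "bool mat" and PB :: "bool mat"
    and n m :: nat and lam :: complex
  assumes "A \<in> carrier_mat n n" and "B \<in> carrier_mat n m"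
    and "PA \<in> carrier_mat n n" and "PB \<in> carrier_mat n m"
    and "eigenvalue (map_mat complex_of_real A) lam"
  shows "Max {mrank (hcat (lam \<cdot>\<^sub>m 1\<^sub>m n - map_mat complex_of_real (A + dA))
                         (map_mat complex_of_real (B + dB))) | dA dB.
                dA \<in> realizations PA \<and> dB \<in> realizations PB} = n
    \<longleftrightarrow>
    (\<exists>JR JC JR' JC'. JR \<subseteq> {0..<n} \<and> JC \<subseteq> {0..<n+m} \<and> card JR = card JC \<and>
       JR' \<subseteq> {0..<n} - JR \<and> JC' \<subseteq> {0..<n+m} - JC \<and>
       card JR' = n - card JC \<and> card JC' = n - card JC \<and>
       det (submatrix (hcat (lam \<cdot>\<^sub>m 1\<^sub>m n - map_mat complex_of_real A)
                            (map_mat complex_of_real B)) JR JC) \<noteq> 0 \<and>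
       generic_rank (submatrix (hcat PA PB) JR' JC') = card JR')"
    (is "Max ?S = n \<longleftrightarrow> ?RHS")
proof -
  note A = assms(1) and B = assms(2) and PA = assms(3) and PB = assms(4)
  define F where "F = hcat (lam \<cdot>\<^sub>m 1\<^sub>m n - map_mat complex_of_real A) (map_mat complex_of_real B)"
  define Mact where "Mact dA dB = hcat (lam \<cdot>\<^sub>m 1\<^sub>m n - map_mat complex_of_real (A + dA))
                         (map_mat complex_of_real (B + dB))" for dA dB
  define Dm where "Dm dA dB = mat n (n+m) (\<lambda>(i,j). if j < n then - dA $$ (i,j) else dB $$ (i, j - n))" for dA dB :: "real mat"
  define P where "P = hcat PA PB"
  have Fc: "F \<in> carrier_mat n (n+m)" unfolding F_def using A B by (intro hcat_carrier) auto
  have Pc: "P \<in> carrier_mat n (n+m)" unfolding P_def using PA PB by (intro hcat_carrier) auto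
  have Mc: "Mact dA dB \<in> carrier_mat n (n+m)" if "dA \<in> carrier_mat n n" "dB \<in> carrier_mat n m" for dA dB
    unfolding Mact_def using A B that by (intro hcat_carrier) auto
  have Dc: "Dm dA dB \<in> carrier_mat n (n+m)" for dA dB unfolding Dm_def by simp
  have Dd: "dim_row (Dm dA dB) = n" "dim_col (Dm dA dB) = n+m" for dA dB unfolding Dm_def by simp_all
  have realA: "dA \<in> carrier_mat n n" if "dA \<in> realizations PA" for dA
    using that PA by (auto simp: realizations_def)
  have realB: "dB \<in> carrier_mat n m" if "dB \<in> realizations PB" for dB
    using that PB by (auto simp: realizations_def)
  have Ment: "Mact dA dB $$ (i,j) = F $$ (i,j) + complex_of_real (Dm dA dB $$ (i,j))"
    if "dA \<in> carrier_mat n n" "dB \<in> carrier_mat n m" "i < n" "j < n + m" for dA dB i j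
    unfolding Mact_def F_def using Mact_entry[OF A B that] that by (simp add: Dm_def)
  have Dz: "Dm dA dB $$ (i,j) = 0"
    if "dA \<in> realizations PA" "dB \<in> realizations PB" "i < n" "j < n + m" "\<not> P $$ (i,j)" for dA dB i j
    using that PA PB by (auto simp: Dm_def P_def hcat_def realizations_def)
  have Sle: "x \<le> n" if "x \<in> ?S" for x
    using that mrank_le[OF Mc] realA realB unfolding Mact_def by blast
  have finS: "finite ?S" using Sle by (meson atMost_iff finite_atMost finite_subset subsetI)
  have "?S \<noteq> {}"
  proof -
    have "0\<^sub>m n n \<in> realizations PA" "0\<^sub>m n m \<in> realizations PB" using PA PB by (auto simp: realizations_def)
    then show ?thesis by blast
  qed
  have maxS: "Max ?S = n \<longleftrightarrow> (\<exists>dA dB. dA \<in> realizations PA \<and> dB \<in> realizations PB \<and> mrank (Mact dA dB) = n)"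
  proof
    assume "Max ?S = n"
    then have "n \<in> ?S" using Max_in[OF finS \<open>?S \<noteq> {}\<close>] by simp
    then show "\<exists>dA dB. dA \<in> realizations PA \<and> dB \<in> realizations PB \<and> mrank (Mact dA dB) = n"
      unfolding Mact_def by (smt (verit) mem_Collect_eq)
  next
    assume "\<exists>dA dB. dA \<in> realizations PA \<and> dB \<in> realizations PB \<and> mrank (Mact dA dB) = n"
    then have "n \<in> ?S" unfolding Mact_def by (metis (mono_tags, lifting) mem_Collect_eq)
    then show "Max ?S = n" using Max_eqI[OF finS Sle] by blast
  qed
  have R0: "{i. i < n \<and> i \<in> (UNIV::nat set)} = {0..<n}" by auto
  show ?thesis unfolding maxS
  proof
    assume "\<exists>dA dB. dA \<in> realizations PA \<and> dB \<in> realizations PB \<and> mrank (Mact dA dB) = n"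
    then obtain dA dB where rA: "dA \<in> realizations PA" and rB: "dB \<in> realizations PB"
      and rk: "mrank (Mact dA dB) = n" by blast
    have M: "Mact dA dB \<in> carrier_mat n (n+m)" using Mc realA[OF rA] realB[OF rB] .
    have "vec_space.rank n (Mact dA dB) = n" using rk M unfolding mrank_def by simp
    from vec_space.rank_minor[OF M this] obtain C where C: "C \<subseteq> {0..<n+m}" "card C = n"
      and dC: "det (submatrix (Mact dA dB) UNIV C) \<noteq> 0" by blast
    have C': "{j. j < n + m \<and> j \<in> C} = C" using C by auto
    have "kinj (\<lambda>i j. Mact dA dB $$ (i,j)) {0..<n} C" using dC unfolding NS[OF M] R0 C' by blast
    then have K: "kinj (\<lambda>i j. F $$ (i,j) + complex_of_real (Dm dA dB $$ (i,j))) {0..<n} C"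
      using kinj_cong[of "{0..<n}" C] Ment[OF realA[OF rA] realB[OF rB]] C by (smt (verit) atLeastLessThan_iff subsetD)
    have fC: "finite C" using C finite_subset by blast
    from split_general[OF _ fC _ K] C obtain T U where TU: "T \<subseteq> {0..<n}" "U \<subseteq> C" "card T = card U"
      and KF: "kinj (\<lambda>i j. F $$ (i,j)) T U"
      and KD: "kinj (\<lambda>i j. complex_of_real (Dm dA dB $$ (i,j))) ({0..<n} - T) (C - U)" by auto
    define JR' where "JR' = {0..<n} - T"
    define JC' where "JC' = C - U"
    have cT: "card T \<le> n" using TU card_mono[of "{0..<n}" T] by simp
    have cJR': "card JR' = n - card U" unfolding JR'_def using TU card_Diff_subset[of T "{0..<n}"]
      by (simp add: finite_subset)
    have cJC': "card JC' = n - card U" unfolding JC'_def using TU C card_Diff_subset[of U C] fC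
      by (simp add: finite_subset)
    have T': "{i. i < n \<and> i \<in> T} = T" using TU by auto
    have U': "{j. j < n + m \<and> j \<in> U} = U" using TU C by auto
    have JR'': "{i. i < n \<and> i \<in> JR'} = JR'" unfolding JR'_def by auto
    have JC'': "{j. j < n + m \<and> j \<in> JC'} = JC'" unfolding JC'_def using C by auto
    have detF: "det (submatrix F T U) \<noteq> 0" unfolding NS[OF Fc] T' U' using TU KF by simp
    let ?P' = "submatrix P JR' JC'"
    let ?Q = "submatrix (Dm dA dB) JR' JC'"
    have dP': "dim_row ?P' = card JR'" "dim_col ?P' = card JC'"
      using Pc JR'' JC'' by (auto simp: dim_submatrix)
    have dQ: "dim_row ?Q = card JR'" "dim_col ?Q = card JC'"
      using Dd JR'' JC'' by (auto simp: dim_submatrix)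
    have Qreal: "?Q \<in> realizations ?P'"
      unfolding realizations_def
    proof (intro CollectI conjI allI impI carrier_matI)
      show "dim_row ?Q = dim_row ?P'" "dim_col ?Q = dim_col ?P'" using dP' dQ by simp_all
      fix a b assume a: "a < dim_row ?P'" and b: "b < dim_col ?P'" and np: "\<not> ?P' $$ (a,b)"
      have a': "a < card {i. i < dim_row P \<and> i \<in> JR'}" "a < card {i. i < dim_row (Dm dA dB) \<and> i \<in> JR'}"
        using a Pc Dd dP' JR'' by auto
      have b': "b < card {j. j < dim_col P \<and> j \<in> JC'}" "b < card {j. j < dim_col (Dm dA dB) \<and> j \<in> JC'}"
        using b Pc Dd dP' JC'' by auto
      have pa: "pick JR' a < n" using pick_le[OF a'(1)] Pc by simp
      have pb: "pick JC' b < n + m" using pick_le[OF b'(1)] Pc by simp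
      have "\<not> P $$ (pick JR' a, pick JC' b)" using np submatrix_index[OF a'(1) b'(1)] by simp
      then show "?Q $$ (a,b) = 0" using submatrix_index[OF a'(2) b'(2)] Dz[OF rA rB pa pb] by simp
    qed
    have cc: "card JR' = card JC'" using cJR' cJC' by simp
    have MQ: "map_mat complex_of_real ?Q = submatrix (map_mat complex_of_real (Dm dA dB)) JR' JC'"
      by (rule eq_matI) (auto simp: dim_submatrix submatrix_index pick_le)
    have MDc: "map_mat complex_of_real (Dm dA dB) \<in> carrier_mat n (n+m)" using Dc by simp
    have "kinj (\<lambda>i j. map_mat complex_of_real (Dm dA dB) $$ (i,j)) JR' JC'
       = kinj (\<lambda>i j. complex_of_real (Dm dA dB $$ (i,j))) JR' JC'"
      by (rule kinj_cong) (use C Dd in \<open>auto simp: JR'_def JC'_def\<close>)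
    then have KD': "kinj (\<lambda>i j. map_mat complex_of_real (Dm dA dB) $$ (i,j)) JR' JC'"
      using KD by (simp add: JR'_def JC'_def)
    have "det (map_mat complex_of_real ?Q) \<noteq> 0"
      unfolding MQ NS[OF MDc] JR'' JC'' using cc KD' by simp
    moreover have QC: "map_mat complex_of_real ?Q \<in> carrier_mat (card JR') (card JR')" using dQ cc by auto
    ultimately have "vec_space.rank (card JR') (map_mat complex_of_real ?Q) = card JR'"
      using vec_space.det_rank_iff[OF QC] by simp
    then have "mrank (map_mat complex_of_real ?Q) = dim_row ?P'" unfolding mrank_def using dQ dP' by simp
    then have gr: "generic_rank ?P' = card JR'" using GR[of ?P'] Qreal dP' by auto
    show ?RHS
      apply (rule exI[of _ T], rule exI[of _ U], rule exI[of _ JR'], rule exI[of _ JC'])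
      using TU C cJR' cJC' detF gr unfolding F_def P_def JR'_def JC'_def by auto
  next
    assume ?RHS
    then obtain JR JC JR' JC' where J: "JR \<subseteq> {0..<n}" "JC \<subseteq> {0..<n+m}" "card JR = card JC"
       "JR' \<subseteq> {0..<n} - JR" "JC' \<subseteq> {0..<n+m} - JC"
       "card JR' = n - card JC" "card JC' = n - card JC"
      and detF: "det (submatrix F JR JC) \<noteq> 0"
      and gr: "generic_rank (submatrix P JR' JC') = card JR'" unfolding F_def P_def by blast
    have fin: "finite JR" "finite JC" "finite JR'" "finite JC'" using J finite_subset by blast+
    have cJC: "card JC \<le> n" using J card_mono[of "{0..<n}" JR] by simp
    have JReq: "JR' = {0..<n} - JR"
    proof (rule card_subset_eq)
      show "finite ({0..<n} - JR)" by simp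
      show "JR' \<subseteq> {0..<n} - JR" using J by simp
      show "card JR' = card ({0..<n} - JR)" using J card_Diff_subset[of JR "{0..<n}"] fin by simp
    qed
    have JR1: "{i. i < n \<and> i \<in> JR} = JR" using J by auto
    have JC1: "{j. j < n + m \<and> j \<in> JC} = JC" using J by auto
    have JR'1: "{i. i < n \<and> i \<in> JR'} = JR'" using J by auto
    have JC'1: "{j. j < n + m \<and> j \<in> JC'} = JC'" using J by auto
    have KF: "kinj (\<lambda>i j. F $$ (i,j)) JR JC" using detF unfolding NS[OF Fc] JR1 JC1 by blast
    define k where "k = card JR'"
    have kC: "card JC' = k" using J k_def by simp
    let ?P' = "submatrix P JR' JC'"
    have dP': "dim_row ?P' = k" "dim_col ?P' = k" using Pc JR'1 JC'1 kC by (auto simp: dim_submatrix k_def)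
    obtain Q where Q: "Q \<in> realizations ?P'" and rQ: "mrank (map_mat complex_of_real Q) = k"
      using gr GR[of ?P'] dP' k_def by auto
    have Qc: "Q \<in> carrier_mat k k" using Q dP' by (auto simp: realizations_def)
    have QQ: "map_mat complex_of_real Q \<in> carrier_mat k k" using Qc by simp
    have "det (map_mat complex_of_real Q) \<noteq> 0"
      using vec_space.det_rank_iff[OF QQ] rQ unfolding mrank_def using Qc by simp
    moreover have "map_mat complex_of_real Q = mat k k (\<lambda>(a,b). complex_of_real (Q $$ (a,b)))"
      using Qc by (intro eq_matI) auto
    ultimately have KQ: "kinj (\<lambda>a b. complex_of_real (Q $$ (a,b))) {0..<k} {0..<k}" using K0 by metis
    define Qe where "Qe i j = (if i \<in> JR' \<and> j \<in> JC' then Q $$ (card {x\<in>JR'. x < i}, card {x\<in>JC'. x < j}) else 0)" for i j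
    have Qpick: "Qe (pick JR' a) (pick JC' b) = Q $$ (a,b)" if "a < k" "b < k" for a b
    proof -
      have "pick JR' a \<in> JR'" "card {x\<in>JR'. x < pick JR' a} = a" using that k_def pick_in_set card_pick by auto
      moreover have "pick JC' b \<in> JC'" "card {x\<in>JC'. x < pick JC' b} = b" using that kC pick_in_set card_pick by auto
      ultimately show ?thesis unfolding Qe_def by simp
    qed
    have bR': "bij_betw (pick JR') {0..<k} JR'" using pick_bij[OF fin(3)] k_def by simp
    have bC': "bij_betw (pick JC') {0..<k} JC'" using pick_bij[OF fin(4)] kC by simp
    have "kinj (\<lambda>a b. complex_of_real (Qe (pick JR' a) (pick JC' b))) {0..<k} {0..<k}"
      using KQ kinj_cong[of "{0..<k}" "{0..<k}"] Qpick by (smt (verit) atLeastLessThan_iff)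
    then have KQe: "kinj (\<lambda>i j. complex_of_real (Qe i j)) JR' JC'"
      using KT[OF bR' bC', of "\<lambda>i j. complex_of_real (Qe i j)"] by simp
    have disj: "JR \<inter> JR' = {}" "JC \<inter> JC' = {}" using J by auto
    have unR: "JR \<union> JR' = {0..<n}" using JReq J by auto
    have cC: "card (JC \<union> JC') = n" using card_Un_disjoint[OF fin(2) fin(4) disj(2)] J cJC by simp
    have cc: "card (JR \<union> JR') = card (JC \<union> JC')" using unR cC by simp
    obtain t :: real where Kt: "kinj (\<lambda>i j. F $$ (i,j) + complex_of_real t * complex_of_real (Qe i j)) (JR \<union> JR') (JC \<union> JC')"
    proof -
      have Ez: "\<And>i j. \<not> (i \<in> JR' \<and> j \<in> JC') \<Longrightarrow> complex_of_real (Qe i j) = 0"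
        by (auto simp: Qe_def)
      show ?thesis using exists_t[OF fin(1,3,2,4) disj cc KF KQe Ez] that by blast
    qed
    define dA where "dA = mat n n (\<lambda>(i,j). - (t * Qe i j))"
    define dB where "dB = mat n m (\<lambda>(i,j). t * Qe i (n + j))"
    have Qz: "Qe i j = 0" if "i < n" "j < n + m" "\<not> P $$ (i,j)" for i j
    proof (cases "i \<in> JR' \<and> j \<in> JC'")
      case True
      define a where "a = card {x\<in>JR'. x < i}"
      define b where "b = card {x\<in>JC'. x < j}"
      have pa: "pick JR' a = i" using True pick_card_in_set a_def by blast
      have pb: "pick JC' b = j" using True pick_card_in_set b_def by blast
      have "{x\<in>JR'. x < i} \<subset> JR'" using True by auto
      then have a: "a < k" unfolding a_def k_def using fin(3) psubset_card_mono by blast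
      have "{x\<in>JC'. x < j} \<subset> JC'" using True by auto
      then have b: "b < k" unfolding b_def using kC fin(4) psubset_card_mono by metis
      have a': "a < card {i. i < dim_row P \<and> i \<in> JR'}" using a Pc JR'1 k_def by simp
      have b': "b < card {j. j < dim_col P \<and> j \<in> JC'}" using b Pc JC'1 kC by simp
      have "\<not> ?P' $$ (a,b)" using submatrix_index[OF a' b'] pa pb that by simp
      then have "Q $$ (a,b) = 0" using Q a b dP' by (auto simp: realizations_def)
      then show ?thesis using True unfolding Qe_def a_def b_def by simp
    qed (auto simp: Qe_def)
    have rA: "dA \<in> realizations PA"
      unfolding realizations_def using PA Qz by (auto simp: dA_def P_def hcat_def)
    have rB: "dB \<in> realizations PB"
    proof -
      have "Qe i (n + j) = 0" if "i < n" "j < m" "\<not> PB $$ (i,j)" for i j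
        using Qz[of i "n+j"] that PA PB by (auto simp: P_def hcat_def)
      then show ?thesis unfolding realizations_def using PB by (auto simp: dB_def)
    qed
    have dAc: "dA \<in> carrier_mat n n" and dBc: "dB \<in> carrier_mat n m" by (auto simp: dA_def dB_def)
    have M: "Mact dA dB \<in> carrier_mat n (n+m)" using Mc[OF dAc dBc] .
    define C where "C = JC \<union> JC'"
    have Csub: "C \<subseteq> {0..<n+m}" using J by (auto simp: C_def)
    have C1: "{j. j < n + m \<and> j \<in> C} = C" using Csub by auto
    have "kinj (\<lambda>i j. Mact dA dB $$ (i,j)) {0..<n} C"
    proof -
      have "kinj (\<lambda>i j. Mact dA dB $$ (i,j)) {0..<n} C =
         kinj (\<lambda>i j. F $$ (i,j) + complex_of_real t * complex_of_real (Qe i j)) {0..<n} C"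
      proof (rule kinj_cong)
        fix i j assume i: "i \<in> {0..<n}" and j: "j \<in> C"
        then have "j < n + m" using Csub by auto
        then show "Mact dA dB $$ (i,j) = F $$ (i,j) + complex_of_real t * complex_of_real (Qe i j)"
          using Ment[OF dAc dBc, of i j] i by (auto simp: Dm_def dA_def dB_def)
      qed
      then show ?thesis using Kt unR by (simp add: C_def)
    qed
    then have "det (submatrix (Mact dA dB) UNIV C) \<noteq> 0"
      unfolding NS[OF M] R0 C1 using cC by (simp add: C_def)
    from vec_space.rank_gt_minor[OF M this] have "n \<le> vec_space.rank n (Mact dA dB)"
      unfolding C1 using cC by (simp add: C_def)
    moreover have "vec_space.rank n (Mact dA dB) \<le> n" using vec_space.rank_le_nr[OF M] .
    ultimately have "mrank (Mact dA dB) = n" unfolding mrank_def using M by simp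
    then show "\<exists>dA dB. dA \<in> realizations PA \<and> dB \<in> realizations PB \<and> mrank (Mact dA dB) = n"
      using rA rB by blast
  qed
qed

end
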